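(* Let $S_X,S_Y$ be finite nonempty action sets, $\varphi:S_X\times S_Y\to\mathbb{R}$, and $\lambda\in[0,1)$. Suppose that $\sigma_X:\mathcal{H}\to\Delta(S_X)$ is a $(\varphi,\lambda)$-autocratic behavioral strategy for player $X$ (of arbitrary memory). Then there exists a two-point reactive learning strategy for $X$ that is also $(\varphi,\lambda)$-autocratic.
   Context: Two players $X,Y$ play a repeated game with finite action sets $S_X,S_Y$; $\Delta(S)$ denotes the probability distributions on $S$. $\varphi$ is extended to mixed actions in its first argument by $\varphi(\tau_X,s_Y)=\mathbb{E}_{s_X\sim\tau_X}[\varphi(s_X,s_Y)]$. Histories: $\mathcal{H}=\bigcup_{T\ge0}(S_X\times S_Y)^T$ (including the empty history). A behavioral strategy for $X$ is a map $\sigma_X:\mathcal{H}\to\Delta(S_X)$, and similarly for $Y$. In each round $t=0,1,2,\dots$ the players independently draw $s_X^t\sim\sigma_X[h^t]$ and $s_Y^t\sim\sigma_Y[h^t]$, where $h^t$ is the history of realized action pairs in rounds $0,\dots,t-1$; $\mathbb{E}_{\sigma_X,\sigma_Y}$ denotes expectation over the resulting random play. For $\lambda\in[0,1)$, $\sigma_X$ is $(\varphi,\lambda)$-autocratic if for every behavioral strategy $\sigma_Y$ of $Y$, $\mathbb{E}_{\sigma_X,\sigma_Y}\big[(1-\lambda)\sum_{t\ge0}\lambda^t\varphi(s_X^t,s_Y^t)\big]=0$. A reactive learning strategy for $X$ is a pair $(\sigma_X^0,\sigma_X^* )$ with $\sigma_X^0\in\Delta(S_X)$ and $\sigma_X^*:\Delta(S_X)\times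 S_Y\to\Delta(S_X)$; it is played by using the mixed action $\tau_X^0=\sigma_X^0$ in round $0$ and $\tau_X^{t+1}=\sigma_X^*[\tau_X^t,s_Y^t]$ in round $t+1$, where $s_Y^t$ is $Y$'s realized action in round $t$. It is a two-point reactive learning strategy if there exist $\tau_X^+,\tau_X^-\in\Delta(S_X)$, $p_0\in[0,1]$ and $p^*:[0,1]\times S_Y\to[0,1]$ such that $\sigma_X^0=p_0\tau_X^++(1-p_0)\tau_X^-$ and $\sigma_X^*[p\tau_X^++(1-p)\tau_X^-,s_Y]=p^*[p,s_Y]\tau_X^++(1-p^*[p,s_Y])\tau_X^-$ for all $p\in[0,1]$, $s_Y\in S_Y$ (so every mixed action played is a mixture of $\tau_X^+$ and $\tau_X^-$). *)

theory Defs
  imports "HOL-Probability.Probability"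
begin

(* Action sets S_X, S_Y are the finite (hence nonempty) types 'x, 'y.
   Mixed actions Delta(S) are pmfs.  Histories are lists of action pairs in
   chronological order (round 0 first). *)

type_synonym ('x, 'y) history = "('x \<times> 'y) list"
type_synonym ('x, 'y, 'a) behav_strategy = "('x, 'y) history \<Rightarrow> 'a pmf"

fun hist_pmf :: "('x, 'y, 'x) behav_strategy \<Rightarrow> ('x, 'y, 'y) behav_strategy
                  \<Rightarrow> nat \<Rightarrow> ('x, 'y) history pmf" where
  "hist_pmf \<sigma>X \<sigma>Y 0 = return_pmf []"
| "hist_pmf \<sigma>X \<sigma>Y (Suc t) =
     bind_pmf (hist_pmf \<sigma>X \<sigma>Y t) (\<lambda>h.
       bind_pmf (\<sigma>X h) (\<lambda>x.
         bind_pmf (\<sigma>Y h) (\<lambda>y. return_pmf (h @ [(x, y)]))))"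

(* E[phi(s_X^t, s_Y^t)]: the round-t action pair is the last entry of h^{t+1} *)
definition stage_payoff ::
  "('x \<Rightarrow> 'y \<Rightarrow> real) \<Rightarrow> ('x, 'y, 'x) behav_strategy \<Rightarrow> ('x, 'y, 'y) behav_strategy
   \<Rightarrow> nat \<Rightarrow> real" where
  "stage_payoff \<phi> \<sigma>X \<sigma>Y t =
     measure_pmf.expectation (hist_pmf \<sigma>X \<sigma>Y (Suc t)) (\<lambda>h. case_prod \<phi> (last h))"

(* E[(1-lambda) sum_t lambda^t phi(s^t)], the (bounded) discounted sum's expectation
   computed termwise *)
definition discounted_payoff ::
  "('x \<Rightarrow> 'y \<Rightarrow> real) \<Rightarrow> real \<Rightarrow> ('x, 'y, 'x) behav_strategy \<Rightarrow> ('x, 'y, 'y) behav_strategy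
   \<Rightarrow> real" where
  "discounted_payoff \<phi> \<delta> \<sigma>X \<sigma>Y = (1 - \<delta>) * (\<Sum>t. \<delta> ^ t * stage_payoff \<phi> \<sigma>X \<sigma>Y t)"

definition autocratic ::
  "('x \<Rightarrow> 'y \<Rightarrow> real) \<Rightarrow> real \<Rightarrow> ('x, 'y, 'x) behav_strategy \<Rightarrow> bool" where
  "autocratic \<phi> \<delta> \<sigma>X \<longleftrightarrow> (\<forall>\<sigma>Y :: ('x, 'y, 'y) behav_strategy. discounted_payoff \<phi> \<delta> \<sigma>X \<sigma>Y = 0)"

definition reactive_strategy ::
  "'x pmf \<Rightarrow> ('x pmf \<Rightarrow> 'y \<Rightarrow> 'x pmf) \<Rightarrow> ('x, 'y, 'x) behav_strategy" where
  "reactive_strategy \<sigma>0 \<sigma>s h = foldl (\<lambda>\<tau> xy. \<sigma>s \<tau> (snd xy)) \<sigma>0 h"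

definition mix :: "real \<Rightarrow> 'x pmf \<Rightarrow> 'x pmf \<Rightarrow> 'x pmf" where
  "mix p \<tau>p \<tau>m = bind_pmf (bernoulli_pmf p) (\<lambda>b. if b then \<tau>p else \<tau>m)"

definition two_point ::
  "'x pmf \<Rightarrow> ('x pmf \<Rightarrow> 'y \<Rightarrow> 'x pmf) \<Rightarrow> bool" where
  "two_point \<sigma>0 \<sigma>s \<longleftrightarrow>
     (\<exists>\<tau>p \<tau>m p0 (pstar :: real \<Rightarrow> 'y \<Rightarrow> real).
        p0 \<in> {0..1} \<and> (\<forall>p \<in> {0..1}. \<forall>y. pstar p y \<in> {0..1}) \<and>
        \<sigma>0 = mix p0 \<tau>p \<tau>m \<and>
        (\<forall>p \<in> {0..1}. \<forall>y. \<sigma>s (mix p \<tau>p \<tau>m) y = mix (pstar p y) \<tau>p \<tau>m))"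

end

theory Submission
  imports Defs
begin


definition shiftS :: "('x, 'y, 'a) behav_strategy \<Rightarrow> 'x \<times> 'y \<Rightarrow> ('x, 'y, 'a) behav_strategy" where
  "shiftS \<sigma> xy h = \<sigma> (xy # h)"

lemma hist_shift:
  "hist_pmf \<sigma>X \<sigma>Y (Suc t) = bind_pmf (\<sigma>X []) (\<lambda>x. bind_pmf (\<sigma>Y []) (\<lambda>y.
      map_pmf ((#) (x,y)) (hist_pmf (shiftS \<sigma>X (x,y)) (shiftS \<sigma>Y (x,y)) t)))"
proof (induction t)
  case 0
  then show ?case by (simp add: bind_return_pmf)
next
  case (Suc t)
  show ?case
    apply (subst hist_pmf.simps(2))
    apply (subst Suc)
    apply (simp add: bind_assoc_pmf bind_return_pmf map_pmf_def shiftS_def)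
    done
qed

lemma hist_len: "h \<in> set_pmf (hist_pmf \<sigma>X \<sigma>Y t) \<Longrightarrow> length h = t"
  by (induction t arbitrary: h) auto

lemma exp_bind_pmf:
  fixes g :: "'b \<Rightarrow> real"
  assumes "\<And>z. \<bar>g z\<bar> \<le> B"
  shows "measure_pmf.expectation (bind_pmf M N) g = measure_pmf.expectation M (\<lambda>x. measure_pmf.expectation (N x) g)"
  unfolding measure_pmf_bind
  apply (rule integral_bind[where K="count_space UNIV" and B=B and B'=1])
  using assms apply (auto simp: measure_pmf_in_subprob_algebra)
  done

definition Cb :: "('x::finite \<Rightarrow> 'y::finite \<Rightarrow> real) \<Rightarrow> real" where
  "Cb \<phi> = (\<Sum>x\<in>UNIV. \<Sum>y\<in>UNIV. \<bar>\<phi> x y\<bar>)"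

lemma Cb_bound: "\<bar>\<phi> a b\<bar> \<le> Cb \<phi>"
proof -
  have "\<bar>\<phi> a b\<bar> \<le> (\<Sum>y\<in>UNIV. \<bar>\<phi> a y\<bar>)"
    by (rule member_le_sum[where f="\<lambda>y. \<bar>\<phi> a y\<bar>"]) auto
  also have "\<dots> \<le> (\<Sum>x\<in>UNIV. \<Sum>y\<in>UNIV. \<bar>\<phi> x y\<bar>)"
    by (rule member_le_sum[where f="\<lambda>x. \<Sum>y\<in>UNIV. \<bar>\<phi> x y\<bar>"]) (auto intro: sum_nonneg)
  finally show ?thesis by (simp add: Cb_def)
qed

lemma exp2:
  fixes g :: "'b \<Rightarrow> real" and P :: "'x::finite pmf" and Q :: "'y::finite pmf"
  assumes "\<And>z. \<bar>g z\<bar> \<le> B"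
  shows "measure_pmf.expectation (bind_pmf P (\<lambda>x. bind_pmf Q (\<lambda>y. F x y))) g =
     (\<Sum>x\<in>UNIV. \<Sum>y\<in>UNIV. pmf P x * pmf Q y * measure_pmf.expectation (F x y) g)"
proof -
  have "measure_pmf.expectation (bind_pmf P (\<lambda>x. bind_pmf Q (\<lambda>y. F x y))) g =
     measure_pmf.expectation P (\<lambda>x. measure_pmf.expectation (bind_pmf Q (\<lambda>y. F x y)) g)"
    by (rule exp_bind_pmf[OF assms])
  also have "\<dots> = measure_pmf.expectation P (\<lambda>x. measure_pmf.expectation Q (\<lambda>y. measure_pmf.expectation (F x y) g))"
    by (subst exp_bind_pmf[OF assms]) rule
  also have "\<dots> = (\<Sum>x\<in>UNIV. measure_pmf.expectation Q (\<lambda>y. measure_pmf.expectation (F x y) g) * pmf P x)"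
    by (rule integral_measure_pmf_real) auto
  also have "\<dots> = (\<Sum>x\<in>UNIV. (\<Sum>y\<in>UNIV. measure_pmf.expectation (F x y) g * pmf Q y) * pmf P x)"
    by (subst integral_measure_pmf_real[where A=UNIV]) auto
  also have "\<dots> = (\<Sum>x\<in>UNIV. \<Sum>y\<in>UNIV. pmf P x * pmf Q y * measure_pmf.expectation (F x y) g)"
    by (simp add: sum_distrib_right sum_distrib_left mult_ac)
  finally show ?thesis .
qed

lemma stage0:
  fixes \<phi> :: "'x::finite \<Rightarrow> 'y::finite \<Rightarrow> real"
  shows   "stage_payoff \<phi> \<sigma>X \<sigma>Y 0 = (\<Sum>x\<in>UNIV. \<Sum>y\<in>UNIV. pmf (\<sigma>X []) x * pmf (\<sigma>Y []) y * \<phi> x y)"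
proof -
  have "stage_payoff \<phi> \<sigma>X \<sigma>Y 0 = measure_pmf.expectation
     (bind_pmf (\<sigma>X []) (\<lambda>x. bind_pmf (\<sigma>Y []) (\<lambda>y. return_pmf [(x,y)]))) (\<lambda>h. case_prod \<phi> (last h))"
    by (simp add: stage_payoff_def bind_return_pmf)
  also have "\<dots> = (\<Sum>x\<in>UNIV. \<Sum>y\<in>UNIV. pmf (\<sigma>X []) x * pmf (\<sigma>Y []) y * measure_pmf.expectation (return_pmf [(x,y)]) (\<lambda>h. case_prod \<phi> (last h)))"
    by (rule exp2[where B="Cb \<phi>"]) (auto simp: Cb_bound split: prod.splits)
  finally show ?thesis by simp
qed

lemma stageS:
  fixes \<phi> :: "'x::finite \<Rightarrow> 'y::finite \<Rightarrow> real"
  shows   "stage_payoff \<phi> \<sigma>X \<sigma>Y (Suc t) = (\<Sum>x\<in>UNIV. \<Sum>y\<in>UNIV. pmf (\<sigma>X []) x * pmf (\<sigma>Y []) y *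
      stage_payoff \<phi> (shiftS \<sigma>X (x,y)) (shiftS \<sigma>Y (x,y)) t)"
proof -
  have "stage_payoff \<phi> \<sigma>X \<sigma>Y (Suc t) = (\<Sum>x\<in>UNIV. \<Sum>y\<in>UNIV. pmf (\<sigma>X []) x * pmf (\<sigma>Y []) y *
      measure_pmf.expectation (map_pmf ((#) (x,y)) (hist_pmf (shiftS \<sigma>X (x,y)) (shiftS \<sigma>Y (x,y)) (Suc t))) (\<lambda>h. case_prod \<phi> (last h)))"
    unfolding stage_payoff_def
    by (subst hist_shift, rule exp2[where B="Cb \<phi>"]) (auto simp: Cb_bound split: prod.splits)
  also have "\<dots> = (\<Sum>x\<in>UNIV. \<Sum>y\<in>UNIV. pmf (\<sigma>X []) x * pmf (\<sigma>Y []) y *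
      stage_payoff \<phi> (shiftS \<sigma>X (x,y)) (shiftS \<sigma>Y (x,y)) t)"
  proof (intro sum.cong refl arg_cong2[where f="(*)"])
    fix x y
    show "measure_pmf.expectation (map_pmf ((#) (x,y)) (hist_pmf (shiftS \<sigma>X (x,y)) (shiftS \<sigma>Y (x,y)) (Suc t))) (\<lambda>h. case_prod \<phi> (last h))
      = stage_payoff \<phi> (shiftS \<sigma>X (x,y)) (shiftS \<sigma>Y (x,y)) t"
      unfolding stage_payoff_def integral_map_pmf
      apply (rule integral_cong_AE)
        apply (auto simp: AE_measure_pmf_iff)
      done
  qed
  finally show ?thesis .
qed

lemma avg1:
  fixes P :: "'a::finite pmf"
  assumes "\<And>x. pmf P x > 0 \<Longrightarrow> lo \<le> f x \<and> f x \<le> hi"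
  shows "lo \<le> (\<Sum>x\<in>UNIV. pmf P x * f x) \<and> (\<Sum>x\<in>UNIV. pmf P x * f x) \<le> hi"
proof -
  have s1: "(\<Sum>x\<in>UNIV. pmf P x) = 1" by (rule sum_pmf_eq_1) auto
  have "(\<Sum>x\<in>UNIV. pmf P x * lo) \<le> (\<Sum>x\<in>UNIV. pmf P x * f x)"
  proof (rule sum_mono)
    fix x show "pmf P x * lo \<le> pmf P x * f x"
      using assms[of x] pmf_nonneg[of P x] by (cases "pmf P x = 0") (auto intro: mult_left_mono simp: less_le)
  qed
  moreover have "(\<Sum>x\<in>UNIV. pmf P x * f x) \<le> (\<Sum>x\<in>UNIV. pmf P x * hi)"
  proof (rule sum_mono)
    fix x show "pmf P x * f x \<le> pmf P x * hi"
      using assms[of x] pmf_nonneg[of P x] by (cases "pmf P x = 0") (auto intro: mult_left_mono simp: less_le)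
  qed
  ultimately show ?thesis using s1 by (simp add: sum_distrib_right[symmetric])
qed

lemma avg2:
  fixes P :: "'a::finite pmf" and Q :: "'b::finite pmf"
  assumes "\<And>x y. \<bar>f x y\<bar> \<le> B"
  shows "\<bar>\<Sum>x\<in>UNIV. \<Sum>y\<in>UNIV. pmf P x * pmf Q y * f x y\<bar> \<le> B"
proof -
  have e: "(\<Sum>x\<in>UNIV. \<Sum>y\<in>UNIV. pmf P x * pmf Q y * f x y) = (\<Sum>x\<in>UNIV. pmf P x * (\<Sum>y\<in>UNIV. pmf Q y * f x y))"
    by (simp add: sum_distrib_left mult.assoc)
  have "-B \<le> (\<Sum>y\<in>UNIV. pmf Q y * f x y) \<and> (\<Sum>y\<in>UNIV. pmf Q y * f x y) \<le> B" for x
    by (rule avg1) (use assms[of x] in \<open>metis abs_le_D1 abs_le_D2 minus_le_iff\<close>)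
  note h = this
  have "-B \<le> (\<Sum>x\<in>UNIV. pmf P x * (\<Sum>y\<in>UNIV. pmf Q y * f x y)) \<and> (\<Sum>x\<in>UNIV. pmf P x * (\<Sum>y\<in>UNIV. pmf Q y * f x y)) \<le> B"
    by (rule avg1) (use h in blast)
  then show ?thesis unfolding e by (simp add: abs_le_iff)
qed

lemma stage_bound:
  fixes \<phi> :: "'x::finite \<Rightarrow> 'y::finite \<Rightarrow> real"
  shows "\<bar>stage_payoff \<phi> \<sigma>X \<sigma>Y t\<bar> \<le> Cb \<phi>"
proof (induction t arbitrary: \<sigma>X \<sigma>Y)
  case 0
  show ?case unfolding stage0 by (rule avg2) (rule Cb_bound)
next
  case (Suc t)
  show ?case unfolding stageS by (rule avg2) (rule Suc)
qed

lemma summ_bound: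
  fixes s :: "nat \<Rightarrow> real"
  assumes "0 \<le> \<delta>" "\<delta> < 1" "\<And>t. \<bar>s t\<bar> \<le> C"
  shows "summable (\<lambda>t. \<delta> ^ t * s t)" "\<bar>(1 - \<delta>) * (\<Sum>t. \<delta> ^ t * s t)\<bar> \<le> C"
proof -
  have g: "summable (\<lambda>t. C * \<delta> ^ t)" using assms by (intro summable_mult summable_geometric) auto
  have n: "norm (\<delta> ^ t * s t) \<le> C * \<delta> ^ t" for t
    using assms(1) assms(3)[of t] by (simp add: abs_mult mult.commute mult_right_mono)
  show sm: "summable (\<lambda>t. \<delta> ^ t * s t)"
    by (rule summable_comparison_test[OF _ g]) (use n in auto)
  have sa: "summable (\<lambda>t. \<bar>\<delta> ^ t * s t\<bar>)"
    by (rule summable_comparison_test[OF _ g]) (use n in auto)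
  have "\<bar>\<Sum>t. \<delta> ^ t * s t\<bar> \<le> (\<Sum>t. \<bar>\<delta> ^ t * s t\<bar>)"
    by (rule summable_rabs[OF sa])
  also have "\<dots> \<le> (\<Sum>t. C * \<delta> ^ t)"
    by (rule suminf_le) (use n sa g in auto)
  also have "\<dots> = C / (1 - \<delta>)" using assms by (simp add: suminf_mult suminf_geometric)
  finally have "\<bar>\<Sum>t. \<delta> ^ t * s t\<bar> \<le> C / (1 - \<delta>)" .
  then have "(1 - \<delta>) * \<bar>\<Sum>t. \<delta> ^ t * s t\<bar> \<le> C" using assms by (simp add: pos_le_divide_eq mult.commute)
  then show "\<bar>(1 - \<delta>) * (\<Sum>t. \<delta> ^ t * s t)\<bar> \<le> C"
    using assms by (simp add: abs_mult)
qed

lemma D_bound: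
  fixes \<phi> :: "'x::finite \<Rightarrow> 'y::finite \<Rightarrow> real"
  assumes "0 \<le> \<delta>" "\<delta> < 1"
  shows "\<bar>discounted_payoff \<phi> \<delta> \<sigma>X \<sigma>Y\<bar> \<le> Cb \<phi>"
  unfolding discounted_payoff_def by (rule summ_bound(2)[OF assms stage_bound])

lemma D_rec:
  fixes \<phi> :: "'x::finite \<Rightarrow> 'y::finite \<Rightarrow> real"
  assumes d: "0 \<le> \<delta>" "\<delta> < 1"
  shows "discounted_payoff \<phi> \<delta> \<sigma>X \<sigma>Y =
     (1 - \<delta>) * (\<Sum>x\<in>UNIV. \<Sum>y\<in>UNIV. pmf (\<sigma>X []) x * pmf (\<sigma>Y []) y * \<phi> x y)
     + \<delta> * (\<Sum>x\<in>UNIV. \<Sum>y\<in>UNIV. pmf (\<sigma>X []) x * pmf (\<sigma>Y []) y *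
          discounted_payoff \<phi> \<delta> (shiftS \<sigma>X (x,y)) (shiftS \<sigma>Y (x,y)))"
proof -
  define s where "s = stage_payoff \<phi> \<sigma>X \<sigma>Y"
  define s' where "s' x y = stage_payoff \<phi> (shiftS \<sigma>X (x,y)) (shiftS \<sigma>Y (x,y))" for x y
  define c where "c x y = pmf (\<sigma>X []) x * pmf (\<sigma>Y []) y" for x y
  have sm: "summable (\<lambda>t. \<delta> ^ t * s t)" unfolding s_def by (rule summ_bound(1)[OF d stage_bound])
  have sm': "summable (\<lambda>t. \<delta> ^ t * s' x y t)" for x y unfolding s'_def by (rule summ_bound(1)[OF d stage_bound])
  have "(\<Sum>t. \<delta> ^ t * s t) = s 0 + (\<Sum>t. \<delta> ^ Suc t * s (Suc t))"
    using suminf_split_head[OF sm] by simp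
  also have "(\<lambda>t. \<delta> ^ Suc t * s (Suc t)) = (\<lambda>t. \<delta> * (\<Sum>x\<in>UNIV. \<Sum>y\<in>UNIV. c x y * (\<delta> ^ t * s' x y t)))"
    by (rule ext) (simp add: s_def s'_def c_def stageS sum_distrib_left mult_ac)
  also have "(\<Sum>t. \<delta> * (\<Sum>x\<in>UNIV. \<Sum>y\<in>UNIV. c x y * (\<delta> ^ t * s' x y t)))
      = \<delta> * (\<Sum>x\<in>UNIV. \<Sum>y\<in>UNIV. c x y * (\<Sum>t. \<delta> ^ t * s' x y t))"
  proof -
    have a: "summable (\<lambda>t. c x y * (\<delta> ^ t * s' x y t))" for x y by (intro summable_mult sm')
    have b: "summable (\<lambda>t. (\<Sum>y\<in>UNIV. c x y * (\<delta> ^ t * s' x y t)))" for x by (intro summable_sum a)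
    have "(\<Sum>t. \<delta> * (\<Sum>x\<in>UNIV. \<Sum>y\<in>UNIV. c x y * (\<delta> ^ t * s' x y t)))
       = \<delta> * (\<Sum>t. (\<Sum>x\<in>UNIV. \<Sum>y\<in>UNIV. c x y * (\<delta> ^ t * s' x y t)))"
      by (intro suminf_mult summable_sum a)
    also have "(\<Sum>t. (\<Sum>x\<in>UNIV. \<Sum>y\<in>UNIV. c x y * (\<delta> ^ t * s' x y t)))
       = (\<Sum>x\<in>UNIV. \<Sum>t. \<Sum>y\<in>UNIV. c x y * (\<delta> ^ t * s' x y t))"
      by (rule suminf_sum) (use b in auto)
    also have "\<dots> = (\<Sum>x\<in>UNIV. \<Sum>y\<in>UNIV. \<Sum>t. c x y * (\<delta> ^ t * s' x y t))"
      by (intro sum.cong refl suminf_sum) (use a in auto)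
    also have "\<dots> = (\<Sum>x\<in>UNIV. \<Sum>y\<in>UNIV. c x y * (\<Sum>t. \<delta> ^ t * s' x y t))"
      by (intro sum.cong refl suminf_mult sm')
    finally show ?thesis by simp
  qed
  finally have "(\<Sum>t. \<delta> ^ t * s t) = s 0 + \<delta> * (\<Sum>x\<in>UNIV. \<Sum>y\<in>UNIV. c x y * (\<Sum>t. \<delta> ^ t * s' x y t))" .
  then show ?thesis
    unfolding discounted_payoff_def s_def[symmetric] s'_def[symmetric]
    by (simp add: s_def stage0 c_def sum_distrib_left algebra_simps)
qed

definition phiM :: "('x::finite \<Rightarrow> 'y \<Rightarrow> real) \<Rightarrow> 'x pmf \<Rightarrow> 'y \<Rightarrow> real" where
  "phiM \<phi> \<tau> y = (\<Sum>x\<in>UNIV. pmf \<tau> x * \<phi> x y)"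

lemma sum_return_pmf:
  fixes g :: "'y::finite \<Rightarrow> real"
  shows "(\<Sum>y'\<in>UNIV. pmf (return_pmf y) y' * g y') = g y"
  by (simp add: pmf_return indicator_def)

lemma D_pointY:
  fixes \<phi> :: "'x::finite \<Rightarrow> 'y::finite \<Rightarrow> real"
  assumes d: "0 \<le> \<delta>" "\<delta> < 1"
  shows "discounted_payoff \<phi> \<delta> s (\<lambda>h. case h of [] \<Rightarrow> return_pmf y | xy' # h' \<Rightarrow> F xy' h') =
     (1 - \<delta>) * phiM \<phi> (s []) y + \<delta> * (\<Sum>x\<in>UNIV. pmf (s []) x * discounted_payoff \<phi> \<delta> (shiftS s (x,y)) (F (x,y)))"
proof -
  let ?Y = "(\<lambda>h. case h of [] \<Rightarrow> return_pmf y | xy' # h' \<Rightarrow> F xy' h') :: ('x,'y,'y) behav_strategy"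
  have sh: "shiftS ?Y xy = F xy" for xy by (rule ext) (simp add: shiftS_def)
  have e1: "(\<Sum>x\<in>UNIV. \<Sum>y'\<in>UNIV. pmf (s []) x * pmf (return_pmf y) y' * \<phi> x y') = phiM \<phi> (s []) y"
    unfolding phiM_def
  proof (intro sum.cong refl)
    fix x
    have "(\<Sum>y'\<in>UNIV. pmf (s []) x * pmf (return_pmf y) y' * \<phi> x y') = pmf (s []) x * (\<Sum>y'\<in>UNIV. pmf (return_pmf y) y' * \<phi> x y')"
      by (simp add: sum_distrib_left mult.assoc del: pmf_return)
    also have "\<dots> = pmf (s []) x * \<phi> x y" by (subst sum_return_pmf) rule
    finally show "(\<Sum>y'\<in>UNIV. pmf (s []) x * pmf (return_pmf y) y' * \<phi> x y') = pmf (s []) x * \<phi> x y" .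
  qed
  have e2: "(\<Sum>x\<in>UNIV. \<Sum>y'\<in>UNIV. pmf (s []) x * pmf (return_pmf y) y' * discounted_payoff \<phi> \<delta> (shiftS s (x,y')) (F (x,y')))
     = (\<Sum>x\<in>UNIV. pmf (s []) x * discounted_payoff \<phi> \<delta> (shiftS s (x,y)) (F (x,y)))"
  proof (intro sum.cong refl)
    fix x
    have "(\<Sum>y'\<in>UNIV. pmf (s []) x * pmf (return_pmf y) y' * discounted_payoff \<phi> \<delta> (shiftS s (x,y')) (F (x,y')))
      = pmf (s []) x * (\<Sum>y'\<in>UNIV. pmf (return_pmf y) y' * discounted_payoff \<phi> \<delta> (shiftS s (x,y')) (F (x,y')))"
      by (simp add: sum_distrib_left mult.assoc del: pmf_return)
    also have "\<dots> = pmf (s []) x * discounted_payoff \<phi> \<delta> (shiftS s (x,y)) (F (x,y))"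
      by (subst sum_return_pmf) rule
    finally show "(\<Sum>y'\<in>UNIV. pmf (s []) x * pmf (return_pmf y) y' * discounted_payoff \<phi> \<delta> (shiftS s (x,y')) (F (x,y')))
      = pmf (s []) x * discounted_payoff \<phi> \<delta> (shiftS s (x,y)) (F (x,y))" .
  qed
  show ?thesis
    by (subst D_rec[OF d]) (simp only: sh list.case e1 e2)
qed

lemma D_constY:
  fixes \<phi> :: "'x::finite \<Rightarrow> 'y::finite \<Rightarrow> real"
  assumes d: "0 \<le> \<delta>" "\<delta> < 1"
  shows "discounted_payoff \<phi> \<delta> s (\<lambda>_. return_pmf y) =
     (1 - \<delta>) * phiM \<phi> (s []) y + \<delta> * (\<Sum>x\<in>UNIV. pmf (s []) x * discounted_payoff \<phi> \<delta> (shiftS s (x,y)) (\<lambda>_. return_pmf y))"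
proof -
  have "(\<lambda>_. return_pmf y) = (\<lambda>h. case h of [] \<Rightarrow> return_pmf y | xy' # h' \<Rightarrow> (\<lambda>_ _. return_pmf y) xy' h')"
    by (rule ext) (simp split: list.splits)
  then show ?thesis using D_pointY[OF d, of \<phi> s y "\<lambda>_ _. return_pmf y"] by metis
qed

lemma child_const:
  fixes \<phi> :: "'x::finite \<Rightarrow> 'y::finite \<Rightarrow> real"
  assumes d: "0 < \<delta>" "\<delta> < 1" and c: "\<And>\<sigma>Y. discounted_payoff \<phi> \<delta> s \<sigma>Y = c"
    and px: "pmf (s []) x > 0"
  shows "discounted_payoff \<phi> \<delta> (shiftS s (x,y)) \<sigma>1 = discounted_payoff \<phi> \<delta> (shiftS s (x,y)) \<sigma>2"
proof -
  define F where "F \<sigma> xy' = (if xy' = (x,y) then \<sigma> else \<sigma>1)" for \<sigma> :: "('x,'y,'y) behav_strategy" and xy'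
  define A where "A \<sigma> x' = discounted_payoff \<phi> \<delta> (shiftS s (x',y)) (F \<sigma> (x',y))" for \<sigma> x'
  have eq: "(1 - \<delta>) * phiM \<phi> (s []) y + \<delta> * (\<Sum>x'\<in>UNIV. pmf (s []) x' * A \<sigma> x') = c" for \<sigma>
    using D_pointY[of \<delta> \<phi> s y "F \<sigma>"] d c unfolding A_def by simp
  have "\<delta> * (\<Sum>x'\<in>UNIV. pmf (s []) x' * A \<sigma>1 x') = \<delta> * (\<Sum>x'\<in>UNIV. pmf (s []) x' * A \<sigma>2 x')"
    using eq[of \<sigma>1] eq[of \<sigma>2] by linarith
  then have "(\<Sum>x'\<in>UNIV. pmf (s []) x' * A \<sigma>1 x') = (\<Sum>x'\<in>UNIV. pmf (s []) x' * A \<sigma>2 x')"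
    using d by simp
  then have "(\<Sum>x'\<in>UNIV. pmf (s []) x' * A \<sigma>1 x' - pmf (s []) x' * A \<sigma>2 x') = 0"
    by (simp add: sum_subtractf)
  moreover have "(\<Sum>x'\<in>UNIV. pmf (s []) x' * A \<sigma>1 x' - pmf (s []) x' * A \<sigma>2 x')
     = (\<Sum>x'\<in>UNIV. if x' = x then pmf (s []) x * (A \<sigma>1 x - A \<sigma>2 x) else 0)"
    by (intro sum.cong refl) (auto simp: A_def F_def algebra_simps)
  ultimately have "pmf (s []) x * (A \<sigma>1 x - A \<sigma>2 x) = 0" by simp
  then show ?thesis using px by (simp add: A_def F_def)
qed

inductive_set reach :: "('x, 'y, 'x) behav_strategy \<Rightarrow> ('x, 'y, 'x) behav_strategy set" for s0 where
  root: "s0 \<in> reach s0"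
| step: "s \<in> reach s0 \<Longrightarrow> pmf (s []) x > 0 \<Longrightarrow> shiftS s (x,y) \<in> reach s0"

lemma reach_const:
  fixes \<phi> :: "'x::finite \<Rightarrow> 'y::finite \<Rightarrow> real"
  assumes d: "0 < \<delta>" "\<delta> < 1" and a: "autocratic \<phi> \<delta> s0"
  shows "s \<in> reach s0 \<Longrightarrow> discounted_payoff \<phi> \<delta> s \<sigma>1 = discounted_payoff \<phi> \<delta> s \<sigma>2"
proof (induction arbitrary: \<sigma>1 \<sigma>2 rule: reach.induct)
  case root
  then show ?case using a by (simp add: autocratic_def)
next
  case (step s x y)
  show ?case
    apply (rule child_const[where c="discounted_payoff \<phi> \<delta> s \<sigma>1"])
    using d step by auto
qed

lemma limit_pmf:
  fixes \<phi> :: "'x::finite \<Rightarrow> 'y::finite \<Rightarrow> real" and \<tau> :: "nat \<Rightarrow> 'x pmf"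
  assumes a: "a \<longlonglongrightarrow> c"
    and h: "\<And>n y. lo \<le> a n - (1 - \<delta>) * phiM \<phi> (\<tau> n) y \<and> a n - (1 - \<delta>) * phiM \<phi> (\<tau> n) y \<le> hi"
  shows "\<exists>\<tau>0. \<forall>y. lo \<le> c - (1 - \<delta>) * phiM \<phi> \<tau>0 y \<and> c - (1 - \<delta>) * phiM \<phi> \<tau>0 y \<le> hi"
proof -
  define v where "v n = (\<chi> x. pmf (\<tau> n) x)" for n
  have cpt: "compact (cbox (0::real^'x) (\<chi> x. 1))" by (rule compact_cbox)
  have "v n \<in> cbox 0 (\<chi> x. 1)" for n by (auto simp: v_def mem_box_cart pmf_le_1)
  then obtain l r where l: "l \<in> cbox 0 (\<chi> x. 1)" and r: "strict_mono r" and lim: "(v \<circ> r) \<longlonglongrightarrow> l"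
    using compact_imp_seq_compact[OF cpt] unfolding seq_compact_def by metis
  have comp: "(\<lambda>n. pmf (\<tau> (r n)) x) \<longlonglongrightarrow> l $ x" for x
    using tendsto_vec_nth[OF lim, of x] by (simp add: v_def o_def)
  have nn: "0 \<le> l $ x" for x using l by (auto simp: mem_box_cart)
  have s1: "(\<Sum>x\<in>UNIV. l $ x) = 1"
  proof -
    have "(\<lambda>n. \<Sum>x\<in>UNIV. pmf (\<tau> (r n)) x) \<longlonglongrightarrow> (\<Sum>x\<in>UNIV. l $ x)" by (intro tendsto_sum comp)
    moreover have "(\<Sum>x\<in>UNIV. pmf (\<tau> (r n)) x) = 1" for n by (rule sum_pmf_eq_1) auto
    ultimately show ?thesis by (simp add: LIMSEQ_const_iff)
  qed
  define \<tau>0 where "\<tau>0 = embed_pmf (\<lambda>x. l $ x)"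
  have p0: "pmf \<tau>0 x = l $ x" for x unfolding \<tau>0_def
    by (rule pmf_embed_pmf) (use nn s1 in \<open>auto simp: nn_integral_count_space_finite\<close>)
  have ar: "(\<lambda>n. a (r n)) \<longlonglongrightarrow> c" using LIMSEQ_subseq_LIMSEQ[OF a r] by (simp add: o_def)
  show ?thesis
  proof (intro exI allI conjI)
    fix y
    have L: "(\<lambda>n. a (r n) - (1 - \<delta>) * phiM \<phi> (\<tau> (r n)) y) \<longlonglongrightarrow> c - (1 - \<delta>) * phiM \<phi> \<tau>0 y"
      unfolding phiM_def p0 by (intro tendsto_intros comp ar)
    show "lo \<le> c - (1 - \<delta>) * phiM \<phi> \<tau>0 y" by (rule LIMSEQ_le_const[OF L]) (use h in auto)
    show "c - (1 - \<delta>) * phiM \<phi> \<tau>0 y \<le> hi" by (rule LIMSEQ_le_const2[OF L]) (use h in auto)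
  qed
qed

lemma reactive_nil[simp]: "reactive_strategy \<sigma>0 \<sigma>s [] = \<sigma>0"
  by (simp add: reactive_strategy_def)

lemma reactive_shift: "shiftS (reactive_strategy \<sigma>0 \<sigma>s) (x,y) = reactive_strategy (\<sigma>s \<sigma>0 y) \<sigma>s"
  by (rule ext) (simp add: reactive_strategy_def shiftS_def)

lemma zero_from_pow:
  fixes d :: real
  assumes "0 \<le> \<delta>" "\<delta> < 1" "\<And>n. \<bar>d\<bar> \<le> \<delta> ^ n * B"
  shows "d = 0"
proof -
  have "(\<lambda>n. \<delta> ^ n * B) \<longlonglongrightarrow> 0 * B"
    by (intro tendsto_intros LIMSEQ_power_zero) (use assms in auto)
  then have "\<bar>d\<bar> \<le> 0" by (intro LIMSEQ_le_const[of _ 0]) (use assms in auto)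
  then show ?thesis by simp
qed

lemma pmf_mix: "0 \<le> p \<Longrightarrow> p \<le> 1 \<Longrightarrow> pmf (mix p a b) x = p * pmf a x + (1 - p) * pmf b x"
  by (simp add: mix_def pmf_bind mult.commute)

lemma phiM_mix:
  fixes \<phi> :: "'x::finite \<Rightarrow> 'y \<Rightarrow> real"
  shows "0 \<le> p \<Longrightarrow> p \<le> 1 \<Longrightarrow> phiM \<phi> (mix p a b) y = p * phiM \<phi> a y + (1 - p) * phiM \<phi> b y"
proof -
  assume p: "0 \<le> p" "p \<le> 1"
  have "phiM \<phi> (mix p a b) y = (\<Sum>x\<in>UNIV. p * (pmf a x * \<phi> x y) + (1 - p) * (pmf b x * \<phi> x y))"
    unfolding phiM_def by (intro sum.cong refl) (simp add: pmf_mix p algebra_simps)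
  also have "\<dots> = p * phiM \<phi> a y + (1 - p) * phiM \<phi> b y"
    unfolding phiM_def by (simp add: sum.distrib sum_distrib_left)
  finally show ?thesis .
qed

lemma degenerate:
  fixes \<phi> :: "'x::finite \<Rightarrow> 'y::finite \<Rightarrow> real"
  assumes d: "0 \<le> \<delta>" "\<delta> < 1" and z: "\<And>y. phiM \<phi> \<tau>0 y = 0"
  shows "\<exists>\<sigma>0 (\<sigma>s :: 'x pmf \<Rightarrow> 'y \<Rightarrow> 'x pmf).
           two_point \<sigma>0 \<sigma>s \<and> autocratic \<phi> \<delta> (reactive_strategy \<sigma>0 \<sigma>s)"
proof (intro exI conjI)
  let ?s = "(\<lambda>_ _. \<tau>0) :: 'x pmf \<Rightarrow> 'y \<Rightarrow> 'x pmf"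
  have mx: "mix p \<tau>0 \<tau>0 = \<tau>0" for p by (simp add: mix_def)
  show "two_point \<tau>0 ?s"
    unfolding two_point_def
    by (rule exI[of _ \<tau>0], rule exI[of _ \<tau>0], rule exI[of _ 0], rule exI[of _ "\<lambda>_ _. 0"]) (simp add: mx)
  have r: "reactive_strategy \<tau>0 ?s = (\<lambda>_. \<tau>0)"
  proof (rule ext)
    fix h :: "('x,'y) history" show "reactive_strategy \<tau>0 ?s h = \<tau>0"
      unfolding reactive_strategy_def by (induction h) auto
  qed
  have sh: "shiftS (\<lambda>_. \<tau>0) xy = (\<lambda>_. \<tau>0)" for xy :: "'x \<times> 'y" by (rule ext) (simp add: shiftS_def)
  have first: "(\<Sum>x\<in>UNIV. \<Sum>y\<in>UNIV. pmf \<tau>0 x * pmf (\<sigma>Y []) y * \<phi> x y) = 0" for \<sigma>Y :: "('x,'y,'y) behav_strategy"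
  proof -
    have "(\<Sum>x\<in>UNIV. \<Sum>y\<in>UNIV. pmf \<tau>0 x * pmf (\<sigma>Y []) y * \<phi> x y) = (\<Sum>y\<in>UNIV. pmf (\<sigma>Y []) y * phiM \<phi> \<tau>0 y)"
      unfolding phiM_def by (subst sum.swap) (simp add: sum_distrib_left mult_ac)
    then show ?thesis by (simp add: z)
  qed
  have "\<forall>\<sigma>Y. \<bar>discounted_payoff \<phi> \<delta> (\<lambda>_. \<tau>0) \<sigma>Y\<bar> \<le> \<delta> ^ n * Cb \<phi>" for n
  proof (induction n)
    case 0
    show ?case using D_bound[OF d, of \<phi> "\<lambda>_. \<tau>0"] by simp
  next
    case (Suc n)
    show ?case
    proof
      fix \<sigma>Y :: "('x,'y,'y) behav_strategy"
      have "discounted_payoff \<phi> \<delta> (\<lambda>_. \<tau>0) \<sigma>Y = \<delta> * (\<Sum>x\<in>UNIV. \<Sum>y\<in>UNIV. pmf \<tau>0 x * pmf (\<sigma>Y []) y *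
          discounted_payoff \<phi> \<delta> (\<lambda>_. \<tau>0) (shiftS \<sigma>Y (x,y)))"
        using D_rec[OF d, of \<phi> "\<lambda>_. \<tau>0" \<sigma>Y] by (simp add: sh first)
      also have "\<bar>\<dots>\<bar> \<le> \<delta> * (\<delta> ^ n * Cb \<phi>)"
        using d by (simp add: abs_mult mult_left_mono avg2 Suc)
      finally show "\<bar>discounted_payoff \<phi> \<delta> (\<lambda>_. \<tau>0) \<sigma>Y\<bar> \<le> \<delta> ^ Suc n * Cb \<phi>" by simp
    qed
  qed
  then show "autocratic \<phi> \<delta> (reactive_strategy \<tau>0 ?s)"
    unfolding autocratic_def r using zero_from_pow[OF d] by blast
qed



lemma conv_bounds:
  fixes lo hi A B p :: real
  assumes "lo \<le> A" "A \<le> hi" "lo \<le> B" "B \<le> hi" "0 \<le> p" "p \<le> 1"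
  shows "lo \<le> p * A + (1 - p) * B \<and> p * A + (1 - p) * B \<le> hi"
proof -
  have "p * lo \<le> p * A" "p * A \<le> p * hi" using assms by (auto intro: mult_left_mono)
  moreover have "(1 - p) * lo \<le> (1 - p) * B" "(1 - p) * B \<le> (1 - p) * hi" using assms by (auto intro: mult_left_mono)
  moreover have "p * lo + (1 - p) * lo = lo" "p * hi + (1 - p) * hi = hi" by (simp_all add: algebra_simps)
  ultimately show ?thesis by linarith
qed

lemma general:
  fixes \<phi> :: "'x::finite \<Rightarrow> 'y::finite \<Rightarrow> real" and \<tau>p \<tau>m :: "'x pmf"
  assumes d: "0 < \<delta>" "\<delta> < 1" and kK: "k < K" "k \<le> 0" "0 \<le> K"
    and hp: "\<And>y. \<delta> * k \<le> K - (1 - \<delta>) * phiM \<phi> \<tau>p y \<and> K - (1 - \<delta>) * phiM \<phi> \<tau>p y \<le> \<delta> * K"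
    and hm: "\<And>y. \<delta> * k \<le> k - (1 - \<delta>) * phiM \<phi> \<tau>m y \<and> k - (1 - \<delta>) * phiM \<phi> \<tau>m y \<le> \<delta> * K"
  shows "\<exists>\<sigma>0 (\<sigma>s :: 'x pmf \<Rightarrow> 'y \<Rightarrow> 'x pmf).
           two_point \<sigma>0 \<sigma>s \<and> autocratic \<phi> \<delta> (reactive_strategy \<sigma>0 \<sigma>s)"
proof -
  have d': "0 \<le> \<delta>" using d by simp
  define w where "w p = k + p * (K - k)" for p :: real
  define N where "N p y = w p - (1 - \<delta>) * phiM \<phi> (mix p \<tau>p \<tau>m) y" for p y
  define pst where "pst p y = (N p y / \<delta> - k) / (K - k)" for p y
  have Nconv: "N p y = p * (K - (1 - \<delta>) * phiM \<phi> \<tau>p y) + (1 - p) * (k - (1 - \<delta>) * phiM \<phi> \<tau>m y)"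
    if "p \<in> {0..1}" for p y
    using that by (simp add: N_def w_def phiM_mix algebra_simps)
  have Nb: "\<delta> * k \<le> N p y \<and> N p y \<le> \<delta> * K" if "p \<in> {0..1}" for p y
    unfolding Nconv[OF that] using hp[of y] hm[of y] that by (intro conv_bounds) auto
  have pst01: "pst p y \<in> {0..1}" if "p \<in> {0..1}" for p y
  proof -
    have "k \<le> N p y / \<delta>" "N p y / \<delta> \<le> K" using Nb[OF that, of y] d
      by (simp_all add: pos_le_divide_eq pos_divide_le_eq mult.commute)
    then show ?thesis using kK unfolding pst_def by (auto simp: divide_le_eq_1)
  qed
  have wpst: "w (pst p y) = N p y / \<delta>" for p y unfolding w_def pst_def using kK by simp
  have key: "w p = (1 - \<delta>) * phiM \<phi> (mix p \<tau>p \<tau>m) y + \<delta> * w (pst p y)" for p y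
    using wpst d by (simp add: N_def)
  have gp: "K \<le> phiM \<phi> \<tau>p y" for y
  proof -
    have A: "K - (1 - \<delta>) * phiM \<phi> \<tau>p y \<le> \<delta> * K" using hp[of y] by blast
    have B: "(1 - \<delta>) * K = K - \<delta> * K" by (simp add: algebra_simps)
    have "(1 - \<delta>) * K \<le> (1 - \<delta>) * phiM \<phi> \<tau>p y" using A B by linarith
    then show ?thesis by (rule mult_left_le_imp_le) (use d in auto)
  qed
  have gm: "phiM \<phi> \<tau>m y \<le> k" for y
  proof -
    have A: "\<delta> * k \<le> k - (1 - \<delta>) * phiM \<phi> \<tau>m y" using hm[of y] by blast
    have B: "(1 - \<delta>) * k = k - \<delta> * k" by (simp add: algebra_simps)
    have "(1 - \<delta>) * phiM \<phi> \<tau>m y \<le> (1 - \<delta>) * k" using A B by linarith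
    then show ?thesis by (rule mult_left_le_imp_le) (use d in auto)
  qed
  obtain x0 where x0: "pmf \<tau>p x0 \<noteq> pmf \<tau>m x0"
  proof -
    have "\<tau>p \<noteq> \<tau>m"
    proof
      assume "\<tau>p = \<tau>m"
      then have "phiM \<phi> \<tau>p undefined = phiM \<phi> \<tau>m undefined" by simp
      with gp[of undefined] gm[of undefined] kK show False by linarith
    qed
    then have "\<exists>x. pmf \<tau>p x \<noteq> pmf \<tau>m x" using pmf_eqI[of \<tau>p \<tau>m] by auto
    then show ?thesis using that by auto
  qed
  have inj: "p = q" if "p \<in> {0..1}" "q \<in> {0..1}" "mix p \<tau>p \<tau>m = mix q \<tau>p \<tau>m" for p q
  proof -
    have e: "pmf (mix p \<tau>p \<tau>m) x0 = pmf (mix q \<tau>p \<tau>m) x0" using that(3) by (rule arg_cong)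
    have "p * pmf \<tau>p x0 + (1 - p) * pmf \<tau>m x0 = q * pmf \<tau>p x0 + (1 - q) * pmf \<tau>m x0"
      using e pmf_mix[of p \<tau>p \<tau>m x0] pmf_mix[of q \<tau>p \<tau>m x0] that(1,2) by simp
    moreover have "(p - q) * (pmf \<tau>p x0 - pmf \<tau>m x0) = (p * pmf \<tau>p x0 + (1 - p) * pmf \<tau>m x0) - (q * pmf \<tau>p x0 + (1 - q) * pmf \<tau>m x0)"
      by (simp add: algebra_simps)
    ultimately have "(p - q) * (pmf \<tau>p x0 - pmf \<tau>m x0) = 0" by simp
    then show ?thesis using x0 by simp
  qed
  define sel where "sel \<tau> = (SOME p. p \<in> {0..1} \<and> mix p \<tau>p \<tau>m = \<tau>)" for \<tau>
  have selmix: "sel (mix p \<tau>p \<tau>m) = p" if "p \<in> {0..1}" for p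
    unfolding sel_def
  proof (rule some_equality)
    show "p \<in> {0..1} \<and> mix p \<tau>p \<tau>m = mix p \<tau>p \<tau>m" using that by simp
  next
    fix q assume "q \<in> {0..1} \<and> mix q \<tau>p \<tau>m = mix p \<tau>p \<tau>m"
    then show "q = p" using inj[of q p] that by simp
  qed
  define \<sigma>s where "\<sigma>s \<tau> y = mix (pst (sel \<tau>) y) \<tau>p \<tau>m" for \<tau> y
  define p0 where "p0 = - k / (K - k)"
  have "p0 \<ge> 0" unfolding p0_def using kK by (intro divide_nonneg_pos) auto
  moreover have "p0 \<le> 1" unfolding p0_def using kK by (subst pos_divide_le_eq) auto
  ultimately have p0: "p0 \<in> {0..1}" by simp
  have wp0: "w p0 = 0" using kK by (simp add: w_def p0_def)
  have sstep: "\<sigma>s (mix p \<tau>p \<tau>m) y = mix (pst p y) \<tau>p \<tau>m" if "p \<in> {0..1}" for p y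
    using selmix[OF that] by (simp add: \<sigma>s_def)
  have tp: "two_point (mix p0 \<tau>p \<tau>m) \<sigma>s"
    unfolding two_point_def
    by (rule exI[of _ \<tau>p], rule exI[of _ \<tau>m], rule exI[of _ p0], rule exI[of _ pst])
       (use p0 pst01 sstep in auto)
  define B where "B = Cb \<phi> + \<bar>k\<bar> + \<bar>K\<bar>"
  have wb: "\<bar>w p\<bar> \<le> \<bar>k\<bar> + \<bar>K\<bar>" if "p \<in> {0..1}" for p
  proof -
    have "0 \<le> p * (K - k)" "p * (K - k) \<le> K - k" using that kK by (auto simp: mult_left_le_one_le)
    then show ?thesis unfolding w_def using kK by linarith
  qed
  have sum1: "(\<Sum>x\<in>UNIV. pmf P x) = 1" for P :: "'b::finite pmf" by (rule sum_pmf_eq_1) auto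
  have main: "\<forall>p\<in>{0..1}. \<forall>\<sigma>Y. \<bar>discounted_payoff \<phi> \<delta> (reactive_strategy (mix p \<tau>p \<tau>m) \<sigma>s) \<sigma>Y - w p\<bar> \<le> \<delta> ^ n * B" for n
  proof (induction n)
    case 0
    show ?case
    proof (intro ballI allI)
      fix p :: real and \<sigma>Y :: "('x,'y,'y) behav_strategy" assume p: "p \<in> {0..1}"
      have "\<bar>discounted_payoff \<phi> \<delta> (reactive_strategy (mix p \<tau>p \<tau>m) \<sigma>s) \<sigma>Y\<bar> \<le> Cb \<phi>" by (rule D_bound[OF d' d(2)])
      then show "\<bar>discounted_payoff \<phi> \<delta> (reactive_strategy (mix p \<tau>p \<tau>m) \<sigma>s) \<sigma>Y - w p\<bar> \<le> \<delta> ^ 0 * B"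
        using wb[OF p] unfolding B_def by simp
    qed
  next
    case (Suc n)
    show ?case
    proof (intro ballI allI)
      fix p :: real and \<sigma>Y :: "('x,'y,'y) behav_strategy" assume p: "p \<in> {0..1}"
      let ?X = "reactive_strategy (mix p \<tau>p \<tau>m) \<sigma>s"
      define c where "c x y = pmf (mix p \<tau>p \<tau>m) x * pmf (\<sigma>Y []) y" for x y
      define D' where "D' x y = discounted_payoff \<phi> \<delta> (reactive_strategy (mix (pst p y) \<tau>p \<tau>m) \<sigma>s) (shiftS \<sigma>Y (x,y))" for x y
      define W where "W y = w (pst p y)" for y
      have sh: "shiftS ?X (x,y) = reactive_strategy (mix (pst p y) \<tau>p \<tau>m) \<sigma>s" for x y
        by (simp add: reactive_shift sstep[OF p])
      have Drec: "discounted_payoff \<phi> \<delta> ?X \<sigma>Y = (1 - \<delta>) * (\<Sum>x\<in>UNIV. \<Sum>y\<in>UNIV. c x y * \<phi> x y) + \<delta> * (\<Sum>x\<in>UNIV. \<Sum>y\<in>UNIV. c x y * D' x y)"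
        using D_rec[OF d' d(2), of \<phi> ?X \<sigma>Y] by (simp add: sh c_def D'_def)
      have wsum: "w p = (\<Sum>x\<in>UNIV. \<Sum>y\<in>UNIV. c x y * ((1 - \<delta>) * \<phi> x y + \<delta> * W y))"
      proof -
        have "(\<Sum>x\<in>UNIV. \<Sum>y\<in>UNIV. c x y * ((1 - \<delta>) * \<phi> x y + \<delta> * W y))
            = (\<Sum>y\<in>UNIV. \<Sum>x\<in>UNIV. c x y * ((1 - \<delta>) * \<phi> x y + \<delta> * W y))" by (rule sum.swap)
        also have "\<dots> = (\<Sum>y\<in>UNIV. pmf (\<sigma>Y []) y * (\<Sum>x\<in>UNIV. pmf (mix p \<tau>p \<tau>m) x * ((1 - \<delta>) * \<phi> x y + \<delta> * W y)))"
          by (simp add: c_def sum_distrib_left mult_ac)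
        also have "\<dots> = (\<Sum>y\<in>UNIV. pmf (\<sigma>Y []) y * ((1 - \<delta>) * phiM \<phi> (mix p \<tau>p \<tau>m) y + \<delta> * W y))"
        proof (intro sum.cong refl arg_cong2[where f="(*)"])
          fix y
          have "(\<Sum>x\<in>UNIV. pmf (mix p \<tau>p \<tau>m) x * ((1 - \<delta>) * \<phi> x y + \<delta> * W y))
             = (1 - \<delta>) * (\<Sum>x\<in>UNIV. pmf (mix p \<tau>p \<tau>m) x * \<phi> x y) + \<delta> * W y * (\<Sum>x\<in>UNIV. pmf (mix p \<tau>p \<tau>m) x)"
          proof -
            have "(\<Sum>x\<in>UNIV. pmf (mix p \<tau>p \<tau>m) x * ((1 - \<delta>) * \<phi> x y + \<delta> * W y))
              = (\<Sum>x\<in>UNIV. (1 - \<delta>) * (pmf (mix p \<tau>p \<tau>m) x * \<phi> x y) + (\<delta> * W y) * pmf (mix p \<tau>p \<tau>m) x)"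
              by (intro sum.cong refl) (simp add: algebra_simps)
            also have "\<dots> = (1 - \<delta>) * (\<Sum>x\<in>UNIV. pmf (mix p \<tau>p \<tau>m) x * \<phi> x y) + \<delta> * W y * (\<Sum>x\<in>UNIV. pmf (mix p \<tau>p \<tau>m) x)"
              by (simp add: sum.distrib sum_distrib_left)
            finally show ?thesis .
          qed
          then show "(\<Sum>x\<in>UNIV. pmf (mix p \<tau>p \<tau>m) x * ((1 - \<delta>) * \<phi> x y + \<delta> * W y))
             = (1 - \<delta>) * phiM \<phi> (mix p \<tau>p \<tau>m) y + \<delta> * W y"
            by (simp add: sum1 phiM_def)
        qed
        also have "\<dots> = (\<Sum>y\<in>UNIV. pmf (\<sigma>Y []) y * w p)" by (simp add: W_def key[symmetric])
        also have "\<dots> = w p" by (simp add: sum_distrib_right[symmetric] sum1)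
        finally show ?thesis by simp
      qed
      have split1: "(\<Sum>x\<in>UNIV. \<Sum>y\<in>UNIV. c x y * ((1 - \<delta>) * \<phi> x y + \<delta> * W y))
          = (1 - \<delta>) * (\<Sum>x\<in>UNIV. \<Sum>y\<in>UNIV. c x y * \<phi> x y) + \<delta> * (\<Sum>x\<in>UNIV. \<Sum>y\<in>UNIV. c x y * W y)"
      proof -
        have "(\<Sum>x\<in>UNIV. \<Sum>y\<in>UNIV. c x y * ((1 - \<delta>) * \<phi> x y + \<delta> * W y))
          = (\<Sum>x\<in>UNIV. \<Sum>y\<in>UNIV. (1 - \<delta>) * (c x y * \<phi> x y) + \<delta> * (c x y * W y))"
          by (intro sum.cong refl) (simp add: algebra_simps)
        also have "\<dots> = (1 - \<delta>) * (\<Sum>x\<in>UNIV. \<Sum>y\<in>UNIV. c x y * \<phi> x y) + \<delta> * (\<Sum>x\<in>UNIV. \<Sum>y\<in>UNIV. c x y * W y)"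
          by (simp add: sum.distrib sum_distrib_left)
        finally show ?thesis .
      qed
      have split2: "(\<Sum>x\<in>UNIV. \<Sum>y\<in>UNIV. c x y * (D' x y - W y))
          = (\<Sum>x\<in>UNIV. \<Sum>y\<in>UNIV. c x y * D' x y) - (\<Sum>x\<in>UNIV. \<Sum>y\<in>UNIV. c x y * W y)"
        by (simp add: sum_subtractf right_diff_distrib)
      have diff: "discounted_payoff \<phi> \<delta> ?X \<sigma>Y - w p = \<delta> * (\<Sum>x\<in>UNIV. \<Sum>y\<in>UNIV. c x y * (D' x y - W y))"
        unfolding Drec split2 using wsum split1 by (simp add: algebra_simps)
      have ih: "\<bar>D' x y - W y\<bar> \<le> \<delta> ^ n * B" for x y
        unfolding D'_def W_def using Suc[rule_format, OF pst01[OF p, of y], of "shiftS \<sigma>Y (x,y)"] .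
      have "\<bar>(\<Sum>x\<in>UNIV. \<Sum>y\<in>UNIV. c x y * (D' x y - W y))\<bar> \<le> \<delta> ^ n * B"
        unfolding c_def by (rule avg2) (rule ih)
      then show "\<bar>discounted_payoff \<phi> \<delta> ?X \<sigma>Y - w p\<bar> \<le> \<delta> ^ Suc n * B"
        unfolding diff using d by (simp add: abs_mult mult_left_mono)
    qed
  qed
  have "autocratic \<phi> \<delta> (reactive_strategy (mix p0 \<tau>p \<tau>m) \<sigma>s)"
    unfolding autocratic_def
  proof
    fix \<sigma>Y :: "('x,'y,'y) behav_strategy"
    have "discounted_payoff \<phi> \<delta> (reactive_strategy (mix p0 \<tau>p \<tau>m) \<sigma>s) \<sigma>Y - w p0 = 0"
      by (rule zero_from_pow[OF d' d(2)]) (rule main[rule_format, OF p0])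
    then show "discounted_payoff \<phi> \<delta> (reactive_strategy (mix p0 \<tau>p \<tau>m) \<sigma>s) \<sigma>Y = 0" using wp0 by simp
  qed
  then show ?thesis using tp by blast
qed

theorem theorem1:
  fixes \<phi> :: "'x::finite \<Rightarrow> 'y::finite \<Rightarrow> real"
    and \<delta> :: real
    and \<sigma>X :: "('x, 'y, 'x) behav_strategy"
  assumes "0 \<le> \<delta>" and "\<delta> < 1"
    and "autocratic \<phi> \<delta> \<sigma>X"
  shows "\<exists>\<sigma>0 (\<sigma>s :: 'x pmf \<Rightarrow> 'y \<Rightarrow> 'x pmf).
           two_point \<sigma>0 \<sigma>s \<and> autocratic \<phi> \<delta> (reactive_strategy \<sigma>0 \<sigma>s)"
proof (cases "\<delta> = 0")
  case True
  have "phiM \<phi> (\<sigma>X []) y = 0" for y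
  proof -
    have "discounted_payoff \<phi> \<delta> \<sigma>X (\<lambda>_. return_pmf y) = 0" using assms(3) by (simp add: autocratic_def)
    then show ?thesis using D_constY[OF assms(1,2), of \<phi> \<sigma>X y] True by simp
  qed
  then show ?thesis by (rule degenerate[OF assms(1,2)])
next
  case False
  then have d: "0 < \<delta>" "\<delta> < 1" using assms(1,2) by auto
  define Y0 where "Y0 = ((\<lambda>_. return_pmf undefined) :: ('x,'y,'y) behav_strategy)"
  define val where "val s = discounted_payoff \<phi> \<delta> s Y0" for s
  have valc: "discounted_payoff \<phi> \<delta> s \<sigma> = val s" if "s \<in> reach \<sigma>X" for s \<sigma>
    unfolding val_def by (rule reach_const[OF d assms(3) that])
  define V where "V = val ` reach \<sigma>X"
  define K where "K = Sup V"
  define k where "k = Inf V"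
  have Vne: "V \<noteq> {}" unfolding V_def using reach.root by blast
  have Vb: "\<bar>v\<bar> \<le> Cb \<phi>" if "v \<in> V" for v
    using that D_bound[OF assms(1,2)] unfolding V_def val_def by auto
  have bda: "bdd_above V" using Vb by (intro bdd_aboveI[of _ "Cb \<phi>"]) (auto simp: abs_le_iff)
  have bdb: "bdd_below V"
  proof (rule bdd_belowI[of _ "- Cb \<phi>"])
    fix v assume "v \<in> V"
    then have "-v \<le> Cb \<phi>" using Vb abs_le_D2 by blast
    then show "- Cb \<phi> \<le> v" by linarith
  qed
  have vK: "v \<le> K" "k \<le> v" if "v \<in> V" for v
    using that bda bdb unfolding K_def k_def by (auto intro: cSup_upper cInf_lower)
  have val0: "val \<sigma>X = 0" using assms(3) unfolding val_def autocratic_def by simp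
  have "0 \<in> V" unfolding V_def using reach.root val0 by force
  then have kK: "k \<le> 0" "0 \<le> K" using vK by auto
  have ineq: "\<delta> * k \<le> val s - (1 - \<delta>) * phiM \<phi> (s []) y \<and> val s - (1 - \<delta>) * phiM \<phi> (s []) y \<le> \<delta> * K"
    if s: "s \<in> reach \<sigma>X" for s y
  proof -
    have e: "val s = (1 - \<delta>) * phiM \<phi> (s []) y + \<delta> * (\<Sum>x\<in>UNIV. pmf (s []) x * discounted_payoff \<phi> \<delta> (shiftS s (x,y)) (\<lambda>_. return_pmf y))"
      using D_constY[OF assms(1,2), of \<phi> s y] valc[OF s] by simp
    have "k \<le> (\<Sum>x\<in>UNIV. pmf (s []) x * discounted_payoff \<phi> \<delta> (shiftS s (x,y)) (\<lambda>_. return_pmf y)) \<and>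
          (\<Sum>x\<in>UNIV. pmf (s []) x * discounted_payoff \<phi> \<delta> (shiftS s (x,y)) (\<lambda>_. return_pmf y)) \<le> K"
    proof (rule avg1)
      fix x assume "pmf (s []) x > 0"
      then have r: "shiftS s (x,y) \<in> reach \<sigma>X" using s by (intro reach.step)
      then have "discounted_payoff \<phi> \<delta> (shiftS s (x,y)) (\<lambda>_. return_pmf y) \<in> V"
        unfolding V_def valc[OF r] by blast
      then show "k \<le> discounted_payoff \<phi> \<delta> (shiftS s (x,y)) (\<lambda>_. return_pmf y) \<and>
          discounted_payoff \<phi> \<delta> (shiftS s (x,y)) (\<lambda>_. return_pmf y) \<le> K" using vK by blast
    qed
    then show ?thesis unfolding e using d by (auto intro: mult_left_mono)
  qed
  show ?thesis
  proof (cases "k = K")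
    case True
    then have k0: "k = 0" "K = 0" using kK by auto
    have "phiM \<phi> (\<sigma>X []) y = 0" for y
    proof -
      have "0 \<le> - (1 - \<delta>) * phiM \<phi> (\<sigma>X []) y" "- (1 - \<delta>) * phiM \<phi> (\<sigma>X []) y \<le> 0"
        using ineq[OF reach.root, of y] val0 k0 by auto
      then have "(1 - \<delta>) * phiM \<phi> (\<sigma>X []) y = 0" by linarith
      then show ?thesis using d by simp
    qed
    then show ?thesis by (rule degenerate[OF assms(1,2)])
  next
    case False
    then have kltK: "k < K" using kK by auto
    have "\<forall>n. \<exists>s. s \<in> reach \<sigma>X \<and> K - inverse (real (Suc n)) < val s"
    proof
      fix n
      have "K - inverse (real (Suc n)) < K" by simp
      then obtain v where "v \<in> V" "K - inverse (real (Suc n)) < v"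
        using less_cSupD[OF Vne] unfolding K_def by blast
      then show "\<exists>s. s \<in> reach \<sigma>X \<and> K - inverse (real (Suc n)) < val s" unfolding V_def by blast
    qed
    then obtain sp where sp: "\<And>n. sp n \<in> reach \<sigma>X" "\<And>n. K - inverse (real (Suc n)) < val (sp n)"
      by metis
    have "\<forall>n. \<exists>s. s \<in> reach \<sigma>X \<and> val s < k + inverse (real (Suc n))"
    proof
      fix n
      have "k < k + inverse (real (Suc n))" by simp
      then obtain v where "v \<in> V" "v < k + inverse (real (Suc n))"
        using cInf_lessD[OF Vne] unfolding k_def by blast
      then show "\<exists>s. s \<in> reach \<sigma>X \<and> val s < k + inverse (real (Suc n))" unfolding V_def by blast
    qed
    then obtain sm where sm: "\<And>n. sm n \<in> reach \<sigma>X" "\<And>n. val (sm n) < k + inverse (real (Suc n))"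
      by metis
    have limp: "(\<lambda>n. val (sp n)) \<longlonglongrightarrow> K"
    proof (rule tendsto_sandwich[where f="\<lambda>n. K - inverse (real (Suc n))" and h="\<lambda>n. K"])
      show "\<forall>\<^sub>F n in sequentially. K - inverse (real (Suc n)) \<le> val (sp n)" using sp(2) by (simp add: less_imp_le)
      show "\<forall>\<^sub>F n in sequentially. val (sp n) \<le> K" using vK sp(1) unfolding V_def by auto
      show "(\<lambda>n. K - inverse (real (Suc n))) \<longlonglongrightarrow> K"
        using tendsto_diff[OF tendsto_const LIMSEQ_inverse_real_of_nat, of K] by simp
    qed simp
    have limm: "(\<lambda>n. val (sm n)) \<longlonglongrightarrow> k"
    proof (rule tendsto_sandwich[where f="\<lambda>n. k" and h="\<lambda>n. k + inverse (real (Suc n))"])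
      show "\<forall>\<^sub>F n in sequentially. val (sm n) \<le> k + inverse (real (Suc n))" using sm(2) by (simp add: less_imp_le)
      show "\<forall>\<^sub>F n in sequentially. k \<le> val (sm n)" using vK sm(1) unfolding V_def by auto
      show "(\<lambda>n. k + inverse (real (Suc n))) \<longlonglongrightarrow> k"
        using tendsto_add[OF tendsto_const LIMSEQ_inverse_real_of_nat, of k] by simp
    qed simp
    obtain \<tau>p where hp: "\<And>y. \<delta> * k \<le> K - (1 - \<delta>) * phiM \<phi> \<tau>p y \<and> K - (1 - \<delta>) * phiM \<phi> \<tau>p y \<le> \<delta> * K"
      using limit_pmf[OF limp, of "\<delta> * k" \<delta> \<phi> "\<lambda>n. sp n []" "\<delta> * K"] ineq[OF sp(1)] by blast
    obtain \<tau>m where hm: "\<And>y. \<delta> * k \<le> k - (1 - \<delta>) * phiM \<phi> \<tau>m y \<and> k - (1 - \<delta>) * phiM \<phi> \<tau>m y \<le> \<delta> * K"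
      using limit_pmf[OF limm, of "\<delta> * k" \<delta> \<phi> "\<lambda>n. sm n []" "\<delta> * K"] ineq[OF sm(1)] by blast
    show ?thesis by (rule general[OF d kltK kK hp hm])
  qed
qed

end
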